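(* Let $d\ge 2$ and let $\rho$ be a diagonal symmetric state on $\mathbb{C}^d\otimes\mathbb{C}^d$ that is PPT, with associated matrix $M=M(\rho)$. Let $\ket{u}=\frac{1}{\sqrt d}(1,\dots,1)^T\in\mathbb{R}^d$ and let $M^{+}$ denote the Moore–Penrose pseudo-inverse of $M$. Suppose there exists $\varepsilon\ge 0$ such that (1) $\varepsilon\le M_{ij}$ for all $0\le i,j<d$; (2) $\ket{u}$ lies in the range of $M$ and $\varepsilon d\le \left(\bra{u}M^{+}\ket{u}\right)^{-1}$; (3) for all $0\le i<d$, $M_{ii}+\varepsilon(d-2)\ge\sum_{j\ne i}M_{ji}$. Then $\rho$ is separable.
   Context: Let $\{\ket{0},\dots,\ket{d-1}\}$ be the computational basis of $\mathbb{C}^d$. Define $\ket{D_{ii}}=\ket{ii}$ and, for $i<j$, $\ket{D_{ij}}=(\ket{ij}+\ket{ji})/\sqrt{2}$. A state $\rho$ on $\mathbb{C}^d\otimes\mathbb{C}^d$ is diagonal symmetric (DS) if $\rho=\sum_{0\le i\le j<d}p_{ij}\ket{D_{ij}}\bra{D_{ij}}$ with $p_{ij}\ge 0$ and $\sum_{i\le j}p_{ij}=1$; set $p_{ji}=p_{ij}$. Its associated matrix $M(\rho)$ is the real symmetric $d\times d$ matrix with $M(\rho)_{ii}=p_{ii}$ and $M(\rho)_{ij}=p_{ij}/2$ for $i\ne j$ (the paper writes $\rho_{ij}$ for the entries of $M(\rho)$). $\rho$ is PPT if its partial transpose with respect to the computational basis of the second factor is positive semidefinite. A state is separable if it is a convex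 combination of product states $\rho^A\otimes\rho^B$. *)

theory Defs
  imports "HOL-Analysis.Analysis"
begin

text \<open>Matrices are represented as functions nat => nat => scalar, together with an
explicit dimension n; only entries with indices below n are meaningful.
The space C^d (x) C^d is identified with C^(d*d), the basis vector |i>|k>
having index i*d+k.\<close>

definition mmul :: "nat \<Rightarrow> (nat \<Rightarrow> nat \<Rightarrow> 'a::comm_semiring_0) \<Rightarrow> (nat \<Rightarrow> nat \<Rightarrow> 'a) \<Rightarrow> nat \<Rightarrow> nat \<Rightarrow> 'a" where
  "mmul n A B i j = (\<Sum>k<n. A i k * B k j)"

definition penrose :: "nat \<Rightarrow> (nat \<Rightarrow> nat \<Rightarrow> real) \<Rightarrow> (nat \<Rightarrow> nat \<Rightarrow> real) \<Rightarrow> bool" where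
  "penrose n M X \<longleftrightarrow>
     (\<forall>i j. (n \<le> i \<or> n \<le> j) \<longrightarrow> X i j = 0) \<and>
     (\<forall>i<n. \<forall>j<n. mmul n (mmul n M X) M i j = M i j) \<and>
     (\<forall>i<n. \<forall>j<n. mmul n (mmul n X M) X i j = X i j) \<and>
     (\<forall>i<n. \<forall>j<n. mmul n M X i j = mmul n M X j i) \<and>
     (\<forall>i<n. \<forall>j<n. mmul n X M i j = mmul n X M j i)"

definition pinv :: "nat \<Rightarrow> (nat \<Rightarrow> nat \<Rightarrow> real) \<Rightarrow> nat \<Rightarrow> nat \<Rightarrow> real" where
  "pinv n M = (THE X. penrose n M X)"

definition psd :: "nat \<Rightarrow> (nat \<Rightarrow> nat \<Rightarrow> complex) \<Rightarrow> bool" where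
  "psd n A \<longleftrightarrow> (\<forall>i<n. \<forall>j<n. A i j = cnj (A j i)) \<and>
     (\<forall>v :: nat \<Rightarrow> complex. let q = (\<Sum>i<n. \<Sum>j<n. cnj (v i) * A i j * v j) in Im q = 0 \<and> Re q \<ge> 0)"

definition density :: "nat \<Rightarrow> (nat \<Rightarrow> nat \<Rightarrow> complex) \<Rightarrow> bool" where
  "density n A \<longleftrightarrow> psd n A \<and> (\<Sum>i<n. A i i) = 1"

definition tensor :: "nat \<Rightarrow> (nat \<Rightarrow> nat \<Rightarrow> complex) \<Rightarrow> (nat \<Rightarrow> nat \<Rightarrow> complex) \<Rightarrow> nat \<Rightarrow> nat \<Rightarrow> complex" where
  "tensor d A B a b = A (a div d) (b div d) * B (a mod d) (b mod d)"

text \<open>Partial transpose w.r.t. the computational basis of the second factor: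
<i k| R^T_B |j l> = <i l| R |j k>.\<close>
definition ptrans :: "nat \<Rightarrow> (nat \<Rightarrow> nat \<Rightarrow> complex) \<Rightarrow> nat \<Rightarrow> nat \<Rightarrow> complex" where
  "ptrans d R a b = R ((a div d) * d + b mod d) ((b div d) * d + a mod d)"

definition PPT :: "nat \<Rightarrow> (nat \<Rightarrow> nat \<Rightarrow> complex) \<Rightarrow> bool" where
  "PPT d R \<longleftrightarrow> psd (d * d) (ptrans d R)"

definition separable :: "nat \<Rightarrow> (nat \<Rightarrow> nat \<Rightarrow> complex) \<Rightarrow> bool" where
  "separable d R \<longleftrightarrow> (\<exists>(m::nat) (p::nat \<Rightarrow> real) A B.
     (\<forall>k<m. 0 \<le> p k) \<and> (\<Sum>k<m. p k) = 1 \<and>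
     (\<forall>k<m. density d (A k) \<and> density d (B k)) \<and>
     (\<forall>a<d*d. \<forall>b<d*d. R a b = (\<Sum>k<m. complex_of_real (p k) * tensor d (A k) (B k) a b)))"

definition dicke :: "nat \<Rightarrow> nat \<Rightarrow> nat \<Rightarrow> nat \<Rightarrow> complex" where
  "dicke d i j a =
     (if i = j then (if a = i * d + i then 1 else 0)
      else (if a = i * d + j \<or> a = j * d + i then complex_of_real (1 / sqrt 2) else 0))"

definition ds_state :: "nat \<Rightarrow> (nat \<Rightarrow> nat \<Rightarrow> real) \<Rightarrow> nat \<Rightarrow> nat \<Rightarrow> complex" where
  "ds_state d p a b = (\<Sum>(i,j)\<in>{(i,j). i \<le> j \<and> j < d}.
      complex_of_real (p i j) * dicke d i j a * cnj (dicke d i j b))"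

definition is_ds_coeffs :: "nat \<Rightarrow> (nat \<Rightarrow> nat \<Rightarrow> real) \<Rightarrow> bool" where
  "is_ds_coeffs d p \<longleftrightarrow> (\<forall>i j. i \<le> j \<and> j < d \<longrightarrow> 0 \<le> p i j) \<and>
     (\<Sum>(i,j)\<in>{(i,j). i \<le> j \<and> j < d}. p i j) = 1"

definition ds_matrix :: "nat \<Rightarrow> (nat \<Rightarrow> nat \<Rightarrow> real) \<Rightarrow> nat \<Rightarrow> nat \<Rightarrow> real" where
  "ds_matrix d p i j = (if i = j then p i i else p (min i j) (max i j) / 2)"

end

theory Submission
  imports Defs "HOL-Library.FuncSet"
begin


definition sepcone :: "nat \<Rightarrow> (nat \<Rightarrow> nat \<Rightarrow> complex) \<Rightarrow> bool" where
"sepcone d R \<longleftrightarrow> (\<exists>(m::nat) (c::nat\<Rightarrow>real) A B. (\<forall>k<m. 0 \<le> c k \<and> Defs.density d (A k) \<and> Defs.density d (B k)) \<and>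
   (\<forall>a<d*d. \<forall>b<d*d. R a b = (\<Sum>k<m. complex_of_real (c k) * tensor d (A k) (B k) a b)))"

lemma sepconeI:
  fixes S :: "'i set"
  assumes "finite S" "\<forall>k\<in>S. 0 \<le> c k \<and> Defs.density d (A k) \<and> Defs.density d (B k)"
    "\<forall>a<d*d. \<forall>b<d*d. R a b = (\<Sum>k\<in>S. complex_of_real (c k) * tensor d (A k) (B k) a b)"
  shows "sepcone d R"
proof -
  obtain h where h: "bij_betw h {0..<card S} S" using ex_bij_betw_nat_finite[OF assms(1)] by blast
  have hin: "\<And>k. k < card S \<Longrightarrow> h k \<in> S" using h by (auto simp: bij_betw_def)
  show ?thesis unfolding sepcone_def
  proof (intro exI conjI allI impI)
    fix k assume "k < card S" then show "0 \<le> (c \<circ> h) k" "density d ((A \<circ> h) k)" "density d ((B \<circ> h) k)"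
      using assms(2) hin by auto
  next
    fix a b assume "a < d*d" "b < d*d"
    then have "R a b = (\<Sum>k\<in>S. complex_of_real (c k) * tensor d (A k) (B k) a b)" using assms(3) by blast
    also have "\<dots> = (\<Sum>k\<in>{0..<card S}. complex_of_real (c (h k)) * tensor d (A (h k)) (B (h k)) a b)"
      using sum.reindex_bij_betw[OF h, of "\<lambda>k. complex_of_real (c k) * tensor d (A k) (B k) a b"] by simp
    finally show "R a b = (\<Sum>k<card S. complex_of_real ((c \<circ> h) k) * tensor d ((A \<circ> h) k) ((B \<circ> h) k) a b)"
      by (simp add: atLeast0LessThan)
  qed
qed

lemma sepcone_cong:
  assumes "sepcone d R" "\<forall>a<d*d. \<forall>b<d*d. R' a b = R a b"
  shows "sepcone d R'"
proof -
  obtain m :: nat and c A B where 1: "\<forall>k<m. 0 \<le> c k \<and> Defs.density d (A k) \<and> Defs.density d (B k)"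
    "\<forall>a<d*d. \<forall>b<d*d. R a b = (\<Sum>k<m. complex_of_real (c k) * tensor d (A k) (B k) a b)"
    using assms(1) unfolding sepcone_def by blast
  show ?thesis unfolding sepcone_def
    by (rule exI[of _ m], rule exI[of _ c], rule exI[of _ A], rule exI[of _ B]) (use 1 assms(2) in simp)
qed

lemma sepcone_zero: "sepcone d (\<lambda>a b. 0)"
  unfolding sepcone_def by (rule exI[of _ "0::nat"]) simp

lemma sepcone_add:
  assumes "sepcone d R1" "sepcone d R2"
  shows "sepcone d (\<lambda>a b. R1 a b + R2 a b)"
proof -
  obtain m1 :: nat and c1 A1 B1 where 1: "\<forall>k<m1. 0 \<le> c1 k \<and> Defs.density d (A1 k) \<and> Defs.density d (B1 k)"
    "\<forall>a<d*d. \<forall>b<d*d. R1 a b = (\<Sum>k<m1. complex_of_real (c1 k) * tensor d (A1 k) (B1 k) a b)"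
    using assms(1) unfolding sepcone_def by blast
  obtain m2 :: nat and c2 A2 B2 where 2: "\<forall>k<m2. 0 \<le> c2 k \<and> Defs.density d (A2 k) \<and> Defs.density d (B2 k)"
    "\<forall>a<d*d. \<forall>b<d*d. R2 a b = (\<Sum>k<m2. complex_of_real (c2 k) * tensor d (A2 k) (B2 k) a b)"
    using assms(2) unfolding sepcone_def by blast
  let ?S = "{..<m1} <+> {..<m2}"
  have fin: "finite ?S" by simp
  have pos: "\<forall>k\<in>?S. 0 \<le> case_sum c1 c2 k \<and> Defs.density d (case_sum A1 A2 k) \<and> Defs.density d (case_sum B1 B2 k)"
  proof
    fix k assume "k \<in> ?S"
    then show "0 \<le> case_sum c1 c2 k \<and> Defs.density d (case_sum A1 A2 k) \<and> Defs.density d (case_sum B1 B2 k)"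
    proof (cases k)
      case (Inl x) then show ?thesis using \<open>k \<in> ?S\<close> 1(1) by auto
    next
      case (Inr x) then show ?thesis using \<open>k \<in> ?S\<close> 2(1) by auto
    qed
  qed
  have eq: "\<forall>a<d*d. \<forall>b<d*d. R1 a b + R2 a b = (\<Sum>k\<in>?S. complex_of_real (case_sum c1 c2 k) * tensor d (case_sum A1 A2 k) (case_sum B1 B2 k) a b)"
  proof (intro allI impI)
    fix a b assume ab: "a < d*d" "b < d*d"
    have "(\<Sum>k\<in>?S. complex_of_real (case_sum c1 c2 k) * tensor d (case_sum A1 A2 k) (case_sum B1 B2 k) a b)
      = (\<Sum>k<m1. complex_of_real (c1 k) * tensor d (A1 k) (B1 k) a b) + (\<Sum>k<m2. complex_of_real (c2 k) * tensor d (A2 k) (B2 k) a b)"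
      by (subst sum.Plus) (simp_all add: comp_def)
    then show "R1 a b + R2 a b = (\<Sum>k\<in>?S. complex_of_real (case_sum c1 c2 k) * tensor d (case_sum A1 A2 k) (case_sum B1 B2 k) a b)"
      using 1(2) 2(2) ab by simp
  qed
  show ?thesis by (rule sepconeI[OF fin pos eq])
qed

lemma sepcone_scale:
  assumes "0 \<le> t" "sepcone d R"
  shows "sepcone d (\<lambda>a b. complex_of_real t * R a b)"
proof -
  obtain m :: nat and c A B where 1: "\<forall>k<m. 0 \<le> c k \<and> Defs.density d (A k) \<and> Defs.density d (B k)"
    "\<forall>a<d*d. \<forall>b<d*d. R a b = (\<Sum>k<m. complex_of_real (c k) * tensor d (A k) (B k) a b)"
    using assms(2) unfolding sepcone_def by blast
  show ?thesis unfolding sepcone_def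
    apply (rule exI[of _ m], rule exI[of _ "\<lambda>k. t * c k"], rule exI[of _ A], rule exI[of _ B])
    using 1 assms(1) by (auto simp: sum_distrib_left mult.assoc)
qed

lemma sepcone_sum:
  assumes "finite I" "\<forall>i\<in>I. sepcone d (R i)"
  shows "sepcone d (\<lambda>a b. \<Sum>i\<in>I. R i a b)"
  using assms
proof (induction I rule: finite_induct)
  case empty then show ?case using sepcone_zero by simp
next
  case (insert x F)
  then show ?case using sepcone_add[of d "R x" "\<lambda>a b. \<Sum>i\<in>F. R i a b"] by simp
qed

lemma sum_divmod:
  fixes g :: "nat \<Rightarrow> nat \<Rightarrow> 'a::comm_monoid_add"
  shows "(\<Sum>a<d*d. g (a div d) (a mod d)) = (\<Sum>i<d. \<Sum>k<d. g i k)"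
proof -
  have "(\<Sum>a<d*d. g (a div d) (a mod d)) = (\<Sum>i<d. \<Sum>a\<in>{i*d..<i*d+d}. g (a div d) (a mod d))"
    using sum.nat_group[of "\<lambda>a. g (a div d) (a mod d)" d d] by simp
  also have "\<dots> = (\<Sum>i<d. \<Sum>k<d. g i k)"
  proof (rule sum.cong[OF refl])
    fix i assume "i \<in> {..<d}"
    have "(\<Sum>a\<in>{i*d..<i*d+d}. g (a div d) (a mod d)) = (\<Sum>k\<in>{0..<d}. g ((k + i*d) div d) ((k+i*d) mod d))"
      using sum.shift_bounds_nat_ivl[of "\<lambda>a. g (a div d) (a mod d)" 0 "i*d" d] by (simp add: add.commute)
    also have "\<dots> = (\<Sum>k<d. g i k)"
      by (rule sum.cong) auto
    finally show "(\<Sum>a\<in>{i*d..<i*d+d}. g (a div d) (a mod d)) = (\<Sum>k<d. g i k)" .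
  qed
  finally show ?thesis .
qed

lemma trace_tensor: "(\<Sum>a<d*d. tensor d A B a a) = (\<Sum>i<d. A i i) * (\<Sum>k<d. B k k)"
  unfolding tensor_def using sum_divmod[of "\<lambda>i k. A i i * B k k" d]
  by (simp add: sum_product)

lemma sep_of_sepcone:
  assumes "sepcone d R" "(\<Sum>a<d*d. R a a) = 1"
  shows "separable d R"
proof -
  obtain m :: nat and c A B where 1: "\<forall>k<m. 0 \<le> c k \<and> Defs.density d (A k) \<and> Defs.density d (B k)"
    "\<forall>a<d*d. \<forall>b<d*d. R a b = (\<Sum>k<m. complex_of_real (c k) * tensor d (A k) (B k) a b)"
    using assms(1) unfolding sepcone_def by blast
  have "(\<Sum>a<d*d. R a a) = (\<Sum>a<d*d. \<Sum>k<m. complex_of_real (c k) * tensor d (A k) (B k) a a)"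
    using 1(2) by simp
  also have "\<dots> = (\<Sum>k<m. complex_of_real (c k) * (\<Sum>a<d*d. tensor d (A k) (B k) a a))"
    by (subst sum.swap) (simp add: sum_distrib_left)
  also have "\<dots> = (\<Sum>k<m. complex_of_real (c k))"
  proof (intro sum.cong refl)
    fix k assume "k \<in> {..<m}"
    then have "Defs.density d (A k)" "Defs.density d (B k)" using 1(1) by auto
    then show "complex_of_real (c k) * (\<Sum>a<d*d. tensor d (A k) (B k) a a) = complex_of_real (c k)"
      by (simp add: trace_tensor Defs.density_def)
  qed
  finally have "complex_of_real (\<Sum>k<m. c k) = 1" using assms(2) by simp
  then have "(\<Sum>k<m. c k) = 1" by (metis of_real_eq_1_iff)
  then show ?thesis unfolding separable_def using 1 by blast
qed



lemma density_rank1: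
  fixes \<phi> :: "nat \<Rightarrow> complex" and s :: real
  assumes "s > 0" "(\<Sum>t<d. \<phi> t * cnj (\<phi> t)) = complex_of_real s"
  shows "Defs.density d (\<lambda>i j. \<phi> i * cnj (\<phi> j) / complex_of_real s)"
proof -
  have herm: "\<forall>i<d. \<forall>j<d. \<phi> i * cnj (\<phi> j) / complex_of_real s = cnj (\<phi> j * cnj (\<phi> i) / complex_of_real s)"
    by simp
  have quad: "Im q = 0 \<and> Re q \<ge> 0"
    if q: "q = (\<Sum>i<d. \<Sum>j<d. cnj (v i) * (\<phi> i * cnj (\<phi> j) / complex_of_real s) * v j)" for v q
  proof -
    define z where "z = (\<Sum>i<d. cnj (v i) * \<phi> i)"
    have cz: "cnj z = (\<Sum>j<d. cnj (\<phi> j) * v j)" unfolding z_def cnj_sum by (simp add: mult.commute)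
    have "z * cnj z = (\<Sum>i<d. \<Sum>j<d. (cnj (v i) * \<phi> i) * (cnj (\<phi> j) * v j))"
      unfolding cz unfolding z_def by (rule sum_product)
    also have "\<dots> = q * complex_of_real s"
      unfolding q using assms(1)
      by (simp add: sum_divide_distrib[symmetric] mult.commute mult.left_commute)
    finally have e: "q * complex_of_real s = complex_of_real ((Re z)^2 + (Im z)^2)"
      using complex_mult_cnj[of z] by simp
    have sn: "complex_of_real s \<noteq> 0" using assms(1) by simp
    have "q = complex_of_real ((Re z)^2 + (Im z)^2) / complex_of_real s"
      using e sn by (simp add: eq_divide_eq)
    then have "q = complex_of_real (((Re z)^2 + (Im z)^2) / s)" by simp
    then show ?thesis using assms(1) by simp
  qed
  have tr: "(\<Sum>i<d. \<phi> i * cnj (\<phi> i) / complex_of_real s) = 1"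
    using assms by (simp add: sum_divide_distrib[symmetric])
  show ?thesis unfolding Defs.density_def psd_def Let_def
    using herm quad tr by blast
qed

lemma prod_pow_bool:
  fixes f :: "nat \<Rightarrow> 'a::comm_monoid_mult"
  assumes "finite S" "i \<in> S"
  shows "(\<Prod>t\<in>S. f t ^ (of_bool (t = i) :: nat)) = f i"
proof -
  have "(\<Prod>t\<in>S. f t ^ (of_bool (t = i) :: nat)) = (\<Prod>t\<in>S. if t = i then f t else 1)"
    by (rule prod.cong) auto
  also have "\<dots> = f i" using assms by (simp add: prod.delta)
  finally show ?thesis .
qed

lemma geo4:
  fixes a b :: nat
  assumes "a \<le> 2" "b \<le> 2"
  shows "(\<Sum>r<4. (\<i> ^ a * (-\<i>) ^ b) ^ r) = (if a = b then 4 else 0)"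
proof -
  have s4: "(\<Sum>r<4. (z::complex) ^ r) = 1 + z + z^2 + z^3" for z
    by (simp add: eval_nat_numeral)
  have "a = 0 \<or> a = 1 \<or> a = 2" "b = 0 \<or> b = 1 \<or> b = 2" using assms by auto
  then show ?thesis unfolding s4
    by (auto simp: eval_nat_numeral)
qed



definition matchp :: "nat \<Rightarrow> nat \<Rightarrow> nat \<Rightarrow> bool" where
  "matchp d a b \<longleftrightarrow> (b div d = a div d \<and> b mod d = a mod d) \<or> (b div d = a mod d \<and> b mod d = a div d)"

definition dsR :: "nat \<Rightarrow> (nat \<Rightarrow> nat \<Rightarrow> real) \<Rightarrow> nat \<Rightarrow> nat \<Rightarrow> complex" where
  "dsR d M a b = (if matchp d a b then complex_of_real (M (a div d) (a mod d)) else 0)"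

lemma multiset_pair:
  fixes i j k l :: nat
  assumes "\<forall>t<d. (of_bool (t = i) + of_bool (t = k) :: nat) = of_bool (t = j) + of_bool (t = l)"
    "i < d" "j < d" "k < d" "l < d"
  shows "(j = i \<and> l = k) \<or> (j = k \<and> l = i)"
proof -
  have 1: "(of_bool (i = i) + of_bool (i = k) :: nat) = of_bool (i = j) + of_bool (i = l)" using assms by blast
  have 2: "(of_bool (k = i) + of_bool (k = k) :: nat) = of_bool (k = j) + of_bool (k = l)" using assms by blast
  have 3: "(of_bool (j = i) + of_bool (j = k) :: nat) = of_bool (j = j) + of_bool (j = l)" using assms by blast
  have 4: "(of_bool (l = i) + of_bool (l = k) :: nat) = of_bool (l = j) + of_bool (l = l)" using assms by blast
  have "i = j \<or> i = l" using 1 by (cases "i = j"; cases "i = l"; simp)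
  then show ?thesis
  proof
    assume ij: "i = j"
    then have "k = l" using 2 by (cases "k = l"; cases "k = i"; simp)
    then show ?thesis using ij by simp
  next
    assume il: "i = l"
    show ?thesis
    proof (cases "i = j")
      case True
      then have "k = l" using 2 by (cases "k = l"; cases "k = i"; simp)
      then show ?thesis using True by simp
    next
      case False
      then have "j = k" using 3 il by (cases "j = k"; simp)
      then show ?thesis using il by simp
    qed
  qed
qed

lemma char_sum:
  assumes "i < d" "j < d" "k < d" "l < d"
  shows "(\<Sum>x\<in>PiE {..<d} (\<lambda>_. {..<4::nat}). \<i>^(x i) * \<i>^(x k) * (-\<i>)^(x j) * (-\<i>)^(x l))
       = (if (j = i \<and> l = k) \<or> (j = k \<and> l = i) then 4^d else 0)"
proof -
  define c where "c t = (of_bool (t = i) + of_bool (t = k) :: nat)" for t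
  define c' where "c' t = (of_bool (t = j) + of_bool (t = l) :: nat)" for t
  define z where "z t = \<i> ^ c t * (-\<i>) ^ c' t" for t
  have key: "\<i>^(x i) * \<i>^(x k) * (-\<i>)^(x j) * (-\<i>)^(x l) = (\<Prod>t<d. z t ^ x t)" for x :: "nat \<Rightarrow> nat"
  proof -
    have "(\<Prod>t<d. z t ^ x t) = (\<Prod>t<d. (\<i>^(x t)) ^ (of_bool (t = i) :: nat) * (\<i>^(x t)) ^ (of_bool (t = k) :: nat)
          * ((-\<i>)^(x t)) ^ (of_bool (t = j) :: nat) * ((-\<i>)^(x t)) ^ (of_bool (t = l) :: nat))"
      unfolding z_def c_def c'_def
      by (intro prod.cong refl) (simp add: power_mult_distrib power_add power_mult[symmetric] mult.commute mult.left_commute)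
    also have "\<dots> = \<i>^(x i) * \<i>^(x k) * (-\<i>)^(x j) * (-\<i>)^(x l)"
      using assms by (simp add: prod.distrib prod_pow_bool)
    finally show ?thesis by simp
  qed
  have "(\<Sum>x\<in>PiE {..<d} (\<lambda>_. {..<4::nat}). \<i>^(x i) * \<i>^(x k) * (-\<i>)^(x j) * (-\<i>)^(x l))
      = (\<Sum>x\<in>PiE {..<d} (\<lambda>_. {..<4::nat}). \<Prod>t<d. z t ^ x t)"
    using key by simp
  also have "\<dots> = (\<Prod>t<d. \<Sum>r<4. z t ^ r)"
    by (rule prod_sum_PiE[symmetric]) auto
  also have "\<dots> = (\<Prod>t<d. if c t = c' t then 4 else 0)"
  proof (intro prod.cong refl)
    fix t
    have "c t \<le> 2" "c' t \<le> 2" unfolding c_def c'_def by auto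
    then show "(\<Sum>r<4. z t ^ r) = (if c t = c' t then 4 else 0)" unfolding z_def by (rule geo4)
  qed
  also have "\<dots> = (if \<forall>t<d. c t = c' t then 4^d else 0)"
  proof (cases "\<forall>t<d. c t = c' t")
    case True
    then have "(\<Prod>t<d. if c t = c' t then 4 else 0) = (\<Prod>t<d. (4::complex))" by (intro prod.cong) auto
    then show ?thesis using True by simp
  next
    case False
    then obtain t where "t < d" "c t \<noteq> c' t" by auto
    then have "(\<Prod>t<d. if c t = c' t then 4 else (0::complex)) = 0" by (intro prod_zero) auto
    then show ?thesis using False by simp
  qed
  also have "(\<forall>t<d. c t = c' t) \<longleftrightarrow> (j = i \<and> l = k) \<or> (j = k \<and> l = i)"
  proof
    assume "\<forall>t<d. c t = c' t"
    then show "(j = i \<and> l = k) \<or> (j = k \<and> l = i)"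
      using multiset_pair[of d i k j l] assms unfolding c_def c'_def by blast
  next
    assume "(j = i \<and> l = k) \<or> (j = k \<and> l = i)"
    then show "\<forall>t<d. c t = c' t" unfolding c_def c'_def by auto
  qed
  finally show ?thesis .
qed



lemma ph_cnj:
  assumes "0 \<le> w"
  shows "complex_of_real (sqrt w) * \<i> ^ n * cnj (complex_of_real (sqrt w) * \<i> ^ n) = complex_of_real w"
proof -
  have e1: "\<i>^n * (-\<i>)^n = 1" by (simp add: power_mult_distrib[symmetric])
  have "complex_of_real (sqrt w) * \<i> ^ n * cnj (complex_of_real (sqrt w) * \<i> ^ n)
     = complex_of_real (sqrt w) * complex_of_real (sqrt w) * (\<i>^n * (-\<i>)^n)"
    by (simp add: mult_ac)
  also have "\<dots> = complex_of_real (sqrt w * sqrt w)" by (simp only: e1 mult_1_right of_real_mult)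
  also have "\<dots> = complex_of_real w" using assms by simp
  finally show ?thesis .
qed

lemma tensor_ph:
  fixes s :: real and v :: "nat \<Rightarrow> real" and x :: "nat \<Rightarrow> nat"
  assumes "s > 0"
  shows "(complex_of_real (sqrt (v i)) * \<i> ^ x i * cnj (complex_of_real (sqrt (v j)) * \<i> ^ x j) / complex_of_real s) *
         (complex_of_real (sqrt (v k)) * \<i> ^ x k * cnj (complex_of_real (sqrt (v l)) * \<i> ^ x l) / complex_of_real s)
       = complex_of_real (sqrt (v i) * sqrt (v j) * sqrt (v k) * sqrt (v l) / s^2) *
                   (\<i>^(x i) * \<i>^(x k) * (-\<i>)^(x j) * (-\<i>)^(x l))"
  using assms by (simp add: field_simps power2_eq_square)

lemma sum_step:
  fixes s q :: real and w :: "'x \<Rightarrow> complex"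
  assumes "s > 0"
  shows "(\<Sum>x\<in>X. complex_of_real (s^2 / 4^d) * (complex_of_real (q / s^2) * w x))
       = complex_of_real (q / 4^d) * (\<Sum>x\<in>X. w x)"
proof -
  have e: "s^2 / 4^d * (q / s^2) = q / 4^d" using assms by (simp add: field_simps)
  have "complex_of_real (s^2 / 4^d) * (complex_of_real (q / s^2) * w x) = complex_of_real (q / 4^d) * w x" for x
    by (simp only: mult.assoc[symmetric] of_real_mult[symmetric] e)
  then show ?thesis by (simp add: sum_distrib_left)
qed

lemma final_match:
  fixes v :: "nat \<Rightarrow> real"
  assumes "\<forall>t<d. 0 \<le> v t" "a div d < d" "a mod d < d" "b div d < d" "b mod d < d"
  shows "complex_of_real (sqrt (v (a div d)) * sqrt (v (b div d)) * sqrt (v (a mod d)) * sqrt (v (b mod d)) / 4^d) *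
       (if (b div d = a div d \<and> b mod d = a mod d) \<or> (b div d = a mod d \<and> b mod d = a div d) then 4^d else 0)
     = dsR d (\<lambda>i k. v i * v k) a b"
proof -
  define i where "i = a div d"
  define k where "k = a mod d"
  define j where "j = b div d"
  define l where "l = b mod d"
  have lt: "i < d" "k < d" "j < d" "l < d" unfolding i_def k_def j_def l_def using assms by auto
  define q where "q = sqrt (v i) * sqrt (v j) * sqrt (v k) * sqrt (v l)"
  have goal: "complex_of_real (q / 4^d) * (if (j = i \<and> l = k) \<or> (j = k \<and> l = i) then 4^d else 0)
     = (if (j = i \<and> l = k) \<or> (j = k \<and> l = i) then complex_of_real (v i * v k) else 0)"
  proof (cases "(j = i \<and> l = k) \<or> (j = k \<and> l = i)")
    case True
    have si: "sqrt (v i) * sqrt (v i) = v i" "sqrt (v k) * sqrt (v k) = v k" using assms(1) lt by auto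
    have q2: "q = (sqrt (v i) * sqrt (v j)) * (sqrt (v k) * sqrt (v l))" by (simp only: q_def mult.assoc)
    have r1: "(x*y)*(y*x) = (x*x)*(y*y)" for x y :: real by (simp add: mult_ac)
    from True have qv: "q = v i * v k"
    proof
      assume h: "j = i \<and> l = k"
      have "q = (sqrt (v i) * sqrt (v i)) * (sqrt (v k) * sqrt (v k))" using q2 h by (simp only:)
      then show ?thesis by (simp only: si)
    next
      assume h: "j = k \<and> l = i"
      have "q = (sqrt (v i) * sqrt (v k)) * (sqrt (v k) * sqrt (v i))" using q2 h by (simp only:)
      also have "\<dots> = (sqrt (v i) * sqrt (v i)) * (sqrt (v k) * sqrt (v k))" by (rule r1)
      finally show ?thesis by (simp only: si)
    qed
    have e0: "(q / 4^d) * 4^d = q" by simp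
    have e: "complex_of_real (q / 4^d) * 4^d = complex_of_real q"
      by (metis e0 of_real_mult of_real_numeral of_real_power)
    have c: "(if (j = i \<and> l = k) \<or> (j = k \<and> l = i) then 4^d else 0) = (4::complex)^d"
      using True by (simp only: if_True)
    have c2: "(if (j = i \<and> l = k) \<or> (j = k \<and> l = i) then complex_of_real (v i * v k) else 0) = complex_of_real (v i * v k)"
      using True by (simp only: if_True)
    show ?thesis unfolding c c2 e by (simp only: qv)
  next
    case False
    then show ?thesis by (simp only: if_False mult_zero_right)
  qed
  show ?thesis using goal unfolding dsR_def matchp_def q_def i_def j_def k_def l_def by simp
qed



lemma sepcone_vec:
  assumes "2 \<le> d" "\<forall>t<d. 0 \<le> v t"
  shows "sepcone d (dsR d (\<lambda>i k. v i * v k))"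
proof -
  have dpos: "0 < d" using assms(1) by simp
  have dm: "a div d < d" "a mod d < d" if "a < d*d" for a
    using that dpos by (auto simp: div_less_iff_less_mult mult.commute)
  define s where "s = (\<Sum>t<d. v t)"
  have s0: "0 \<le> s" unfolding s_def using assms(2) by (intro sum_nonneg) simp
  show ?thesis
  proof (cases "s = 0")
    case True
    then have v0: "\<forall>t<d. v t = 0" unfolding s_def using assms(2) sum_nonneg_eq_0_iff[of "{..<d}" v] by auto
    show ?thesis
      by (rule sepcone_cong[OF sepcone_zero]) (auto simp: dsR_def v0 dm)
  next
    case False
    then have sp: "s > 0" using s0 by simp
    define ph where "ph x t = complex_of_real (sqrt (v t)) * \<i> ^ (x t)" for x :: "nat \<Rightarrow> nat" and t
    define A where "A x = (\<lambda>i j. ph x i * cnj (ph x j) / complex_of_real s)" for x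
    define X where "X = PiE {..<d} (\<lambda>_. {..<4::nat})"
    define c where "c x = s^2 / 4^d" for x :: "nat \<Rightarrow> nat"
    have dens: "Defs.density d (A x)" for x
      unfolding A_def
    proof (rule density_rank1[OF sp])
      have "ph x t * cnj (ph x t) = complex_of_real (v t)" if "t < d" for t
        unfolding ph_def using ph_cnj assms(2) that by blast
      then show "(\<Sum>t<d. ph x t * cnj (ph x t)) = complex_of_real s"
        unfolding s_def of_real_sum by (intro sum.cong refl) simp
    qed
    show ?thesis
    proof (rule sepconeI[of X c d A A])
      show "finite X" unfolding X_def by (simp add: finite_PiE)
      show "\<forall>k\<in>X. 0 \<le> c k \<and> Defs.density d (A k) \<and> Defs.density d (A k)"
        using dens by (simp add: c_def)
      show "\<forall>a<d*d. \<forall>b<d*d. dsR d (\<lambda>i k. v i * v k) a b = (\<Sum>k\<in>X. complex_of_real (c k) * tensor d (A k) (A k) a b)"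
      proof (intro allI impI)
        fix a b assume ab: "a < d*d" "b < d*d"
        have lt: "a div d < d" "a mod d < d" "b div d < d" "b mod d < d" using dm ab by auto
        let ?q = "sqrt (v (a div d)) * sqrt (v (b div d)) * sqrt (v (a mod d)) * sqrt (v (b mod d))"
        let ?w = "\<lambda>x. \<i>^(x (a div d)) * \<i>^(x (a mod d)) * (-\<i>)^(x (b div d)) * (-\<i>)^(x (b mod d))"
        have T: "tensor d (A x) (A x) a b = complex_of_real (?q / s^2) * ?w x" for x
          unfolding tensor_def A_def ph_def by (rule tensor_ph[OF sp])
        have "(\<Sum>x\<in>X. complex_of_real (c x) * tensor d (A x) (A x) a b)
            = (\<Sum>x\<in>X. complex_of_real (s^2 / 4^d) * (complex_of_real (?q / s^2) * ?w x))"
          unfolding T c_def by (rule refl)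
        also have "\<dots> = complex_of_real (?q / 4^d) * (\<Sum>x\<in>X. ?w x)"
          by (rule sum_step[OF sp])
        also have "(\<Sum>x\<in>X. ?w x) = (if (b div d = a div d \<and> b mod d = a mod d) \<or> (b div d = a mod d \<and> b mod d = a div d) then 4^d else 0)"
          unfolding X_def by (rule char_sum[OF lt(1,3,2,4)])
        also have "complex_of_real (?q / 4^d) * (if (b div d = a div d \<and> b mod d = a mod d) \<or> (b div d = a mod d \<and> b mod d = a div d) then 4^d else 0)
           = dsR d (\<lambda>i k. v i * v k) a b"
          by (rule final_match[OF assms(2) lt])
        finally show "dsR d (\<lambda>i k. v i * v k) a b = (\<Sum>x\<in>X. complex_of_real (c x) * tensor d (A x) (A x) a b)" by (rule sym)
      qed
    qed
  qed
qed



lemma decomp_real: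
  fixes M :: "nat \<Rightarrow> nat \<Rightarrow> real" and \<epsilon> :: real
  assumes sym: "\<forall>i<d. \<forall>j<d. M i j = M j i" and ik: "i < d" "k < d"
  shows "M i k = \<epsilon> * (1 * 1)
     + (\<Sum>i'<d. \<Sum>j'\<in>{..<d} - {i'}. ((M i' j' - \<epsilon>) / 2) *
            ((if i = i' \<or> i = j' then 1 else 0) * (if k = i' \<or> k = j' then 1 else 0)))
     + (\<Sum>t<d. (M t t + \<epsilon> * (real d - 2) - (\<Sum>j\<in>{..<d} - {t}. M j t)) *
            ((if i = t then 1 else 0) * (if k = t then 1 else 0)))"
proof -
  define g where "g i' j' = (M i' j' - \<epsilon>) / 2" for i' j'
  define r where "r t = M t t + \<epsilon> * (real d - 2) - (\<Sum>j\<in>{..<d} - {t}. M j t)" for t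
  have gs: "g a b = g b a" if "a < d" "b < d" for a b unfolding g_def using sym that by simp
  show ?thesis
  proof (cases "i = k")
    case False
    have third: "(\<Sum>t<d. r t * ((if i = t then 1 else 0) * (if k = t then 1 else 0))) = 0"
      using False by (intro sum.neutral) auto
    have inner: "(\<Sum>j'\<in>{..<d} - {i'}. g i' j' * ((if i = i' \<or> i = j' then 1 else 0) * (if k = i' \<or> k = j' then 1 else 0)))
        = (if i' = i then g i k else 0) + (if i' = k then g k i else 0)" for i'
    proof -
      have "(\<Sum>j'\<in>{..<d} - {i'}. g i' j' * ((if i = i' \<or> i = j' then 1 else 0) * (if k = i' \<or> k = j' then 1 else 0)))
          = (\<Sum>j'\<in>{..<d} - {i'}. (if i' = i \<and> j' = k then g i' j' else 0) + (if i' = k \<and> j' = i then g i' j' else 0))"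
        using False by (intro sum.cong refl) auto
      also have "\<dots> = (\<Sum>j'\<in>{..<d} - {i'}. if i' = i \<and> j' = k then g i' j' else 0)
                     + (\<Sum>j'\<in>{..<d} - {i'}. if i' = k \<and> j' = i then g i' j' else 0)"
        by (rule sum.distrib)
      also have "(\<Sum>j'\<in>{..<d} - {i'}. if i' = i \<and> j' = k then g i' j' else 0) = (if i' = i then g i k else 0)"
      proof (cases "i' = i")
        case True
        then show ?thesis using False ik by (simp add: sum.delta')
      qed simp
      also have "(\<Sum>j'\<in>{..<d} - {i'}. if i' = k \<and> j' = i then g i' j' else 0) = (if i' = k then g k i else 0)"
      proof (cases "i' = k")
        case True
        then show ?thesis using False ik by (simp add: sum.delta')
      qed simp
      finally show ?thesis .
    qed
    have outer: "(\<Sum>i'<d. (if i' = i then g i k else 0) + (if i' = k then g k i else 0)) = g i k + g k i"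
      using ik by (simp add: sum.distrib)
    have "(\<Sum>i'<d. \<Sum>j'\<in>{..<d} - {i'}. g i' j' * ((if i = i' \<or> i = j' then 1 else 0) * (if k = i' \<or> k = j' then 1 else 0)))
        = g i k + g k i" unfolding inner outer ..
    also have "\<dots> = M i k - \<epsilon>" using gs[OF ik] unfolding g_def by simp
    finally show ?thesis using third unfolding g_def r_def by simp
  next
    case True
    have third: "(\<Sum>t<d. r t * ((if i = t then 1 else 0) * (if k = t then 1 else 0))) = r i"
    proof -
      have "(\<Sum>t<d. r t * ((if i = t then 1 else 0) * (if k = t then 1 else 0))) = (\<Sum>t<d. if t = i then r t else 0)"
        using True by (intro sum.cong refl) auto
      then show ?thesis using ik by (simp add: sum.delta)
    qed
    have inner: "(\<Sum>j'\<in>{..<d} - {i'}. g i' j' * ((if i = i' \<or> i = j' then 1 else 0) * (if k = i' \<or> k = j' then 1 else 0)))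
        = (if i' = i then (\<Sum>j'\<in>{..<d} - {i}. g i j') else g i' i)" if "i' < d" for i'
    proof (cases "i' = i")
      case True
      then show ?thesis using \<open>i = k\<close> by simp
    next
      case False
      have "(\<Sum>j'\<in>{..<d} - {i'}. g i' j' * ((if i = i' \<or> i = j' then 1 else 0) * (if k = i' \<or> k = j' then 1 else 0)))
          = (\<Sum>j'\<in>{..<d} - {i'}. if j' = i then g i' j' else 0)"
        using False \<open>i = k\<close> by (intro sum.cong refl) auto
      also have "\<dots> = g i' i" using False ik by (simp add: sum.delta')
      finally show ?thesis using False by simp
    qed
    have "(\<Sum>i'<d. \<Sum>j'\<in>{..<d} - {i'}. g i' j' * ((if i = i' \<or> i = j' then 1 else 0) * (if k = i' \<or> k = j' then 1 else 0)))
        = (\<Sum>i'<d. if i' = i then (\<Sum>j'\<in>{..<d} - {i}. g i j') else g i' i)"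
      using inner by (intro sum.cong refl) simp
    also have "\<dots> = (\<Sum>j'\<in>{..<d} - {i}. g i j') + (\<Sum>i'\<in>{..<d} - {i}. if i' = i then (\<Sum>j'\<in>{..<d} - {i}. g i j') else g i' i)"
      using ik by (subst sum.remove[of _ i]) auto
    also have "(\<Sum>i'\<in>{..<d} - {i}. if i' = i then (\<Sum>j'\<in>{..<d} - {i}. g i j') else g i' i) = (\<Sum>j\<in>{..<d} - {i}. g j i)"
      by (intro sum.cong refl) auto
    also have "(\<Sum>j'\<in>{..<d} - {i}. g i j') = (\<Sum>j\<in>{..<d} - {i}. g j i)"
      using ik gs by (intro sum.cong refl) auto
    also have "(\<Sum>j\<in>{..<d} - {i}. g j i) + (\<Sum>j\<in>{..<d} - {i}. g j i) = (\<Sum>j\<in>{..<d} - {i}. M j i) - (real d - 1) * \<epsilon>"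
    proof -
      have c: "card ({..<d} - {i}) = d - 1" using ik by simp
      have "(\<Sum>j\<in>{..<d} - {i}. g j i) + (\<Sum>j\<in>{..<d} - {i}. g j i) = (\<Sum>j\<in>{..<d} - {i}. M j i - \<epsilon>)"
        unfolding g_def by (simp add: sum.distrib[symmetric])
      also have "\<dots> = (\<Sum>j\<in>{..<d} - {i}. M j i) - real (d - 1) * \<epsilon>"
        by (simp add: sum_subtractf c)
      also have "real (d - 1) = real d - 1" using ik by simp
      finally show ?thesis .
    qed
    finally have dbl: "(\<Sum>i'<d. \<Sum>j'\<in>{..<d} - {i'}. g i' j' * ((if i = i' \<or> i = j' then 1 else 0) * (if k = i' \<or> k = j' then 1 else 0)))
        = (\<Sum>j\<in>{..<d} - {i}. M j i) - (real d - 1) * \<epsilon>" .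
    show ?thesis using dbl third True unfolding g_def[symmetric] r_def[symmetric]
      unfolding r_def by (simp add: algebra_simps)
  qed
qed



lemma enc:
  fixes x i j d :: nat
  assumes "j < d"
  shows "(x = i * d + j) \<longleftrightarrow> (x div d = i \<and> x mod d = j)"
proof
  assume "x = i * d + j" then show "x div d = i \<and> x mod d = j" using assms by simp
next
  assume "x div d = i \<and> x mod d = j"
  then show "x = i * d + j" using div_mult_mod_eq[of x d] by simp
qed

lemma enc_lt:
  fixes i j d :: nat
  assumes "i < d" "j < d"
  shows "i * d + j < d * d"
proof -
  have "i * d + j < i * d + d" using assms by simp
  also have "\<dots> = (i + 1) * d" by simp
  also have "\<dots> \<le> d * d" using assms by (intro mult_le_mono1) simp
  finally show ?thesis .
qed

lemma dicke_zero:
  assumes "i < d" "j < d" "dicke d i j a \<noteq> 0"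
  shows "(a div d = i \<and> a mod d = j) \<or> (a div d = j \<and> a mod d = i)"
proof -
  have "a = i * d + j \<or> a = j * d + i" using assms(3) unfolding dicke_def by (auto split: if_splits)
  then show ?thesis using enc[OF assms(2), of a i] enc[OF assms(1), of a j] by blast
qed

lemma dicke_norm:
  assumes "i \<le> j" "j < d"
  shows "(\<Sum>a<d*d. dicke d i j a * cnj (dicke d i j a)) = 1"
proof (cases "i = j")
  case True
  have "(\<Sum>a<d*d. dicke d i j a * cnj (dicke d i j a)) = (\<Sum>a<d*d. if a = i * d + i then 1 else 0)"
    using True unfolding dicke_def by (intro sum.cong refl) auto
  also have "\<dots> = 1" using enc_lt[of i d i] assms True by simp
  finally show ?thesis .
next
  case False
  have ne: "i * d + j \<noteq> j * d + i" using enc[of j d "i*d+j" i] enc[of i d "i*d+j" j] assms False by auto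
  have h: "complex_of_real (1 / sqrt 2) * cnj (complex_of_real (1 / sqrt 2)) = 1/2"
  proof -
    have "complex_of_real (1 / sqrt 2) * cnj (complex_of_real (1 / sqrt 2)) = complex_of_real (1 / sqrt 2 * (1 / sqrt 2))"
      by (simp only: complex_cnj_complex_of_real of_real_mult)
    also have "1 / sqrt 2 * (1 / sqrt 2) = (1/2 :: real)" by (simp add: field_simps)
    finally show ?thesis by simp
  qed
  have "(\<Sum>a<d*d. dicke d i j a * cnj (dicke d i j a))
      = (\<Sum>a<d*d. (if a = i * d + j then 1/2 else 0) + (if a = j * d + i then 1/2 else 0))"
    using False ne h unfolding dicke_def by (intro sum.cong refl) auto
  also have "\<dots> = 1" using enc_lt[of i d j] enc_lt[of j d i] assms by (simp add: sum.distrib)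
  finally show ?thesis .
qed

lemma ds_state_eq:
  assumes "0 < d" "a < d*d" "b < d*d"
  shows "ds_state d p a b = dsR d (ds_matrix d p) a b"
proof -
  define i0 where "i0 = a div d"
  define k0 where "k0 = a mod d"
  have lt: "i0 < d" "k0 < d" using assms unfolding i0_def k0_def
    by (auto simp: div_less_iff_less_mult mult.commute)
  have lt2: "b div d < d" "b mod d < d" using assms by (auto simp: div_less_iff_less_mult mult.commute)
  define \<alpha> where "\<alpha> = min i0 k0"
  define \<beta> where "\<beta> = max i0 k0"
  define P where "P = {(i,j). i \<le> j \<and> j < d}"
  define f where "f = (\<lambda>(i,j). complex_of_real (p i j) * dicke d i j a * cnj (dicke d i j b))"
  have finP: "finite P"
  proof -
    have "P \<subseteq> {..<d} \<times> {..<d}" unfolding P_def by auto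
    then show ?thesis by (rule finite_subset) simp
  qed
  have abP: "(\<alpha>, \<beta>) \<in> P" unfolding P_def \<alpha>_def \<beta>_def using lt by auto
  have z: "f x = 0" if "x \<in> P - {(\<alpha>, \<beta>)}" for x
  proof -
    obtain i j where x: "x = (i, j)" by (cases x)
    have ij: "i \<le> j" "j < d" "(i, j) \<noteq> (\<alpha>, \<beta>)" using that unfolding x P_def by auto
    have "dicke d i j a = 0"
    proof (rule ccontr)
      assume "dicke d i j a \<noteq> 0"
      then have "(i0 = i \<and> k0 = j) \<or> (i0 = j \<and> k0 = i)" using dicke_zero[of i d j a] ij
        unfolding i0_def k0_def by auto
      then show False using ij unfolding \<alpha>_def \<beta>_def by auto
    qed
    then show ?thesis unfolding f_def x by simp
  qed
  have "ds_state d p a b = sum f P" unfolding ds_state_def f_def P_def by simp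
  also have "\<dots> = f (\<alpha>, \<beta>) + sum f (P - {(\<alpha>, \<beta>)})" using finP abP by (rule sum.remove)
  also have "sum f (P - {(\<alpha>, \<beta>)}) = 0" using z by (intro sum.neutral) auto
  finally have s1: "ds_state d p a b = f (\<alpha>, \<beta>)" by simp
  have aenc: "a = i0 * d + k0" unfolding i0_def k0_def using div_mult_mod_eq[of a d] by simp
  have mt: "matchp d a b \<longleftrightarrow> (b = \<alpha> * d + \<beta> \<or> b = \<beta> * d + \<alpha>)"
    unfolding matchp_def \<alpha>_def \<beta>_def i0_def[symmetric] k0_def[symmetric]
    using enc[OF lt(1), of b k0] enc[OF lt(2), of b i0] by (auto simp: min_def max_def)
  show ?thesis
  proof (cases "i0 = k0")
    case True
    then have ab: "\<alpha> = i0" "\<beta> = i0" unfolding \<alpha>_def \<beta>_def by auto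
    have da: "dicke d \<alpha> \<beta> a = 1" unfolding dicke_def ab using aenc True by simp
    show ?thesis unfolding s1 f_def dsR_def mt
      using da ab True unfolding dicke_def ds_matrix_def i0_def[symmetric] k0_def[symmetric] by auto
  next
    case False
    then have ab: "\<alpha> < \<beta>" "\<alpha> \<noteq> \<beta>" unfolding \<alpha>_def \<beta>_def by auto
    have aab: "a = \<alpha> * d + \<beta> \<or> a = \<beta> * d + \<alpha>" using aenc unfolding \<alpha>_def \<beta>_def by (auto simp: min_def max_def)
    have da: "dicke d \<alpha> \<beta> a = complex_of_real (1 / sqrt 2)" unfolding dicke_def using ab aab by simp
    have h: "complex_of_real (1 / sqrt 2) * cnj (complex_of_real (1 / sqrt 2)) = 1/2"
    proof -
      have "complex_of_real (1 / sqrt 2) * cnj (complex_of_real (1 / sqrt 2)) = complex_of_real (1 / sqrt 2 * (1 / sqrt 2))"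
        by (simp only: complex_cnj_complex_of_real of_real_mult)
      also have "1 / sqrt 2 * (1 / sqrt 2) = (1/2 :: real)" by (simp add: field_simps)
      finally show ?thesis by simp
    qed
    have mm: "ds_matrix d p i0 k0 = p \<alpha> \<beta> / 2" unfolding ds_matrix_def \<alpha>_def \<beta>_def using False by simp
    show ?thesis
    proof (cases "b = \<alpha> * d + \<beta> \<or> b = \<beta> * d + \<alpha>")
      case True
      have db: "dicke d \<alpha> \<beta> b = complex_of_real (1 / sqrt 2)" unfolding dicke_def using ab True by simp
      have "f (\<alpha>, \<beta>) = complex_of_real (p \<alpha> \<beta>) * (complex_of_real (1 / sqrt 2) * cnj (complex_of_real (1 / sqrt 2)))"
        unfolding f_def by (simp only: prod.case da db mult.assoc)
      also have "\<dots> = complex_of_real (p \<alpha> \<beta> / 2)" unfolding h by simp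
      finally have fv: "f (\<alpha>, \<beta>) = complex_of_real (p \<alpha> \<beta> / 2)" .
      show ?thesis unfolding s1 dsR_def mt i0_def[symmetric] k0_def[symmetric] mm fv using True by simp
    next
      case False
      have db: "dicke d \<alpha> \<beta> b = 0" unfolding dicke_def using ab False by simp
      show ?thesis unfolding s1 dsR_def mt f_def using False db by simp
    qed
  qed
qed

lemma ds_trace:
  assumes "is_ds_coeffs d p"
  shows "(\<Sum>a<d*d. ds_state d p a a) = 1"
proof -
  define P where "P = {(i,j). i \<le> j \<and> j < d}"
  have finP: "finite P"
  proof -
    have "P \<subseteq> {..<d} \<times> {..<d}" unfolding P_def by auto
    then show ?thesis by (rule finite_subset) simp
  qed
  have "(\<Sum>a<d*d. ds_state d p a a) = (\<Sum>a<d*d. \<Sum>x\<in>P. complex_of_real (p (fst x) (snd x)) * (dicke d (fst x) (snd x) a * cnj (dicke d (fst x) (snd x) a)))"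
    unfolding ds_state_def P_def by (intro sum.cong refl) (auto simp: split_beta mult.assoc)
  also have "\<dots> = (\<Sum>x\<in>P. \<Sum>a<d*d. complex_of_real (p (fst x) (snd x)) * (dicke d (fst x) (snd x) a * cnj (dicke d (fst x) (snd x) a)))"
    by (rule sum.swap)
  also have "\<dots> = (\<Sum>x\<in>P. complex_of_real (p (fst x) (snd x)))"
  proof (intro sum.cong refl)
    fix x assume "x \<in> P"
    then have "fst x \<le> snd x" "snd x < d" unfolding P_def by auto
    then show "(\<Sum>a<d*d. complex_of_real (p (fst x) (snd x)) * (dicke d (fst x) (snd x) a * cnj (dicke d (fst x) (snd x) a)))
        = complex_of_real (p (fst x) (snd x))"
      by (simp add: sum_distrib_left[symmetric] dicke_norm)
  qed
  also have "\<dots> = complex_of_real (\<Sum>x\<in>P. p (fst x) (snd x))" by simp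
  also have "(\<Sum>x\<in>P. p (fst x) (snd x)) = 1"
    using assms unfolding is_ds_coeffs_def P_def by (simp add: split_beta)
  finally show ?thesis by simp
qed



theorem theorem5:
  fixes d :: nat and p :: "nat \<Rightarrow> nat \<Rightarrow> real" and \<epsilon> :: real
  defines "M \<equiv> ds_matrix d p"
      and "u \<equiv> (\<lambda>i::nat. 1 / sqrt (real d))"
  assumes "2 \<le> d"
      and "is_ds_coeffs d p"
      and "PPT d (ds_state d p)"
      and "0 \<le> \<epsilon>"
      and "\<forall>i<d. \<forall>j<d. \<epsilon> \<le> M i j"
      and "\<exists>x::nat \<Rightarrow> real. \<forall>i<d. (\<Sum>j<d. M i j * x j) = u i"
      and "\<epsilon> * real d \<le> inverse (\<Sum>i<d. \<Sum>j<d. u i * pinv d M i j * u j)"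
      and "\<forall>i<d. M i i + \<epsilon> * (real d - 2) \<ge> (\<Sum>j\<in>{..<d} - {i}. M j i)"
  shows "separable d (ds_state d p)"
proof -
  have dpos: "0 < d" using assms(3) by simp
  have dm: "a div d < d" "a mod d < d" if "a < d*d" for a
    using that dpos by (auto simp: div_less_iff_less_mult mult.commute)
  have sym: "\<forall>i<d. \<forall>j<d. M i j = M j i"
    unfolding M_def ds_matrix_def by (auto simp: min.commute max.commute)
  define r where "r t = M t t + \<epsilon> * (real d - 2) - (\<Sum>j\<in>{..<d} - {t}. M j t)" for t
  have rpos: "0 \<le> r t" if "t < d" for t using assms(10) that unfolding r_def by auto
  have Npos: "0 \<le> (M i' j' - \<epsilon>) / 2" if "i' < d" "j' < d" for i' j' using assms(7) that by auto
  define R where "R a b = complex_of_real \<epsilon> * dsR d (\<lambda>i k. 1 * 1) a b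
     + (\<Sum>i'<d. \<Sum>j'\<in>{..<d} - {i'}. complex_of_real ((M i' j' - \<epsilon>) / 2) *
          dsR d (\<lambda>i k. (if i = i' \<or> i = j' then 1 else 0) * (if k = i' \<or> k = j' then 1 else 0)) a b)
     + (\<Sum>t<d. complex_of_real (r t) * dsR d (\<lambda>i k. (if i = t then 1 else 0) * (if k = t then 1 else 0)) a b)"
    for a b
  have s1: "sepcone d (\<lambda>a b. complex_of_real \<epsilon> * dsR d (\<lambda>i k. 1 * 1) a b)"
    using sepcone_scale[OF assms(6) sepcone_vec[OF assms(3), of "\<lambda>_. 1"]] by simp
  have s2: "sepcone d (\<lambda>a b. \<Sum>i'<d. \<Sum>j'\<in>{..<d} - {i'}. complex_of_real ((M i' j' - \<epsilon>) / 2) *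
          dsR d (\<lambda>i k. (if i = i' \<or> i = j' then 1 else 0) * (if k = i' \<or> k = j' then 1 else 0)) a b)"
  proof (rule sepcone_sum, simp)
    show "\<forall>i'\<in>{..<d}. sepcone d (\<lambda>a b. \<Sum>j'\<in>{..<d} - {i'}. complex_of_real ((M i' j' - \<epsilon>) / 2) *
          dsR d (\<lambda>i k. (if i = i' \<or> i = j' then 1 else 0) * (if k = i' \<or> k = j' then 1 else 0)) a b)"
    proof
      fix i' assume "i' \<in> {..<d}"
      then have "i' < d" by simp
      show "sepcone d (\<lambda>a b. \<Sum>j'\<in>{..<d} - {i'}. complex_of_real ((M i' j' - \<epsilon>) / 2) *
          dsR d (\<lambda>i k. (if i = i' \<or> i = j' then 1 else 0) * (if k = i' \<or> k = j' then 1 else 0)) a b)"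
      proof (rule sepcone_sum, simp)
        show "\<forall>j'\<in>{..<d} - {i'}. sepcone d (\<lambda>a b. complex_of_real ((M i' j' - \<epsilon>) / 2) *
          dsR d (\<lambda>i k. (if i = i' \<or> i = j' then 1 else 0) * (if k = i' \<or> k = j' then 1 else 0)) a b)"
        proof
          fix j' assume "j' \<in> {..<d} - {i'}"
          then have "j' < d" by simp
          show "sepcone d (\<lambda>a b. complex_of_real ((M i' j' - \<epsilon>) / 2) *
            dsR d (\<lambda>i k. (if i = i' \<or> i = j' then 1 else 0) * (if k = i' \<or> k = j' then 1 else 0)) a b)"
            by (rule sepcone_scale[OF Npos[OF \<open>i' < d\<close> \<open>j' < d\<close>] sepcone_vec[OF assms(3), of "\<lambda>x. if x = i' \<or> x = j' then 1 else 0"]]) simp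
        qed
      qed
    qed
  qed
  have s3: "sepcone d (\<lambda>a b. \<Sum>t<d. complex_of_real (r t) * dsR d (\<lambda>i k. (if i = t then 1 else 0) * (if k = t then 1 else 0)) a b)"
  proof (rule sepcone_sum, simp)
    show "\<forall>t\<in>{..<d}. sepcone d (\<lambda>a b. complex_of_real (r t) * dsR d (\<lambda>i k. (if i = t then 1 else 0) * (if k = t then 1 else 0)) a b)"
    proof
      fix t assume "t \<in> {..<d}"
      then have "t < d" by simp
      show "sepcone d (\<lambda>a b. complex_of_real (r t) * dsR d (\<lambda>i k. (if i = t then 1 else 0) * (if k = t then 1 else 0)) a b)"
        by (rule sepcone_scale[OF rpos[OF \<open>t < d\<close>] sepcone_vec[OF assms(3), of "\<lambda>x. if x = t then 1 else 0"]]) simp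
    qed
  qed
  have sR: "sepcone d R"
    unfolding R_def by (rule sepcone_add[OF sepcone_add[OF s1 s2] s3])
  have sM: "sepcone d (dsR d M)"
  proof (rule sepcone_cong[OF sR], intro allI impI)
    fix a b assume ab: "a < d*d" "b < d*d"
    show "dsR d M a b = R a b"
    proof (cases "matchp d a b")
      case False
      then show ?thesis unfolding R_def dsR_def by simp
    next
      case True
      have eq: "M (a div d) (a mod d) = \<epsilon> * (1 * 1)
     + (\<Sum>i'<d. \<Sum>j'\<in>{..<d} - {i'}. ((M i' j' - \<epsilon>) / 2) *
            ((if a div d = i' \<or> a div d = j' then 1 else 0) * (if a mod d = i' \<or> a mod d = j' then 1 else 0)))
     + (\<Sum>t<d. r t * ((if a div d = t then 1 else 0) * (if a mod d = t then 1 else 0)))"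
        unfolding r_def by (rule decomp_real[OF sym dm[OF ab(1)]])
      have "dsR d M a b = complex_of_real (M (a div d) (a mod d))" unfolding dsR_def using True by simp
      also have "\<dots> = R a b"
        unfolding R_def dsR_def if_P[OF True] eq of_real_add of_real_sum of_real_mult by (rule refl)
      finally show ?thesis .
    qed
  qed
  have sD: "sepcone d (ds_state d p)"
    by (rule sepcone_cong[OF sM]) (auto simp: ds_state_eq[OF dpos] M_def)
  show ?thesis by (rule sep_of_sepcone[OF sD ds_trace[OF assms(4)]])
qed

end
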